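(* Let $\mathcal M=(E_{2n},\mathcal C)$ be a P-matroid, let $i\in[n]$, and let $\widehat{\mathcal M}$ be the lexicographic extension of $\mathcal M$ by $[-\cdot t_i]$. Let $O$ be the partial P-matroid USO defined by $\widehat{\mathcal M}$. Then: (a) for every $v$ with $v_i=1$ we have $O(v)_i=-$ and $O(v)_j=0$ for all $j\neq i$ (so the upper $i$-facet $\{v:v_i=1\}$ is a maximal unoriented subcube); (b) for every $w$ with $w_i=0$ we have $O(w)_i=+$ (so the upper $i$-facet is a hypersink, i.e., a hypervertex all of whose incident edges in dimension $i$ are incoming); (c) if $\mathcal M$ is uniform, then $O(w)_j\neq0$ for all $w$ with $w_i=0$ and all $j\in[n]$.
   Context: An oriented matroid $(E,\mathcal C)$ is given by circuits $X\in\{-,0,+\}^E$ with support $\underline X$; bases are inclusion-maximal subsets containing no circuit support; all bases have the same size (the rank); the oriented matroid is uniform if every subset of size equal to the rank is a basis. Cocircuits $\mathcal C^*$ are the circuits of the dual (inclusion-minimal nonzero signed sets orthogonal to all circuits). For a basis $B$, $e\notin B$: $C(B,e)$ is the unique circuit $X$ with $X_e=+$, $\underline X\subseteq B\cup\{e\}$; for $e\in B$: $C^*(B,e)$ is the unique cocircuit $D$ with $D_e=+$, $\underline D\cap(B\setminus\{e\})=\emptyset$. A localization for $\mathcal M$ is a function $\sigma:\mathcal C^*\to\{-,0,+\}$ specifying an extension $\widehat{\mathcal M}$ to $E\cup\{q\}$ such that for every cocircuit $Y$ of $\mathcal M$, $(Y,\sigma(Y))$ (sign $\sigma(Y)$ on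 $q$) is a cocircuit of $\widehat{\mathcal M}$. For $e\in E$ and $s\in\{-,0,+\}$, the function $\sigma(D)=s\cdot D_e$ if $D_e\neq0$, $\sigma(D)=0$ otherwise, is a localization; the extension it specifies is the lexicographic extension by $[s\cdot e]$. $S=\{s_1,\dots,s_n\}$, $T=\{t_1,\dots,t_n\}$, $E_{2n}=S\cup T$; a P-matroid is an oriented matroid on $E_{2n}$ in which $S$ is a basis and no circuit $X$ satisfies $X_{s_i}=-X_{t_i}$ for all $i$ with $\{s_i,t_i\}\subseteq\underline X$. For $v\in\{0,1\}^n$, $B(v)=\{s_j:v_j=0\}\cup\{t_j:v_j=1\}$. The partial P-matroid USO of $\widehat{\mathcal M}$ is $O:\{0,1\}^n\to\{-,0,+\}^n$ with, for $C=C(B(v),q)$ and $e=s_j$ if $v_j=0$, $e=t_j$ if $v_j=1$: $O(v)_j=+$ if $C_e=-$ (outgoing), $-$ if $C_e=+$ (incoming), $0$ if $C_e=0$ (unoriented). *)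

theory Defs
  imports Main
begin

datatype sign = Neg | Zero | Pos

fun sneg :: "sign \<Rightarrow> sign" where
  "sneg Neg = Pos" | "sneg Zero = Zero" | "sneg Pos = Neg"

fun smult :: "sign \<Rightarrow> sign \<Rightarrow> sign" where
  "smult Zero _ = Zero" | "smult _ Zero = Zero"
| "smult Pos x = x" | "smult Neg x = sneg x"

type_synonym 'a signed = "'a \<Rightarrow> sign"

definition supp :: "'a signed \<Rightarrow> 'a set" where
  "supp X = {e. X e \<noteq> Zero}"

definition posp :: "'a signed \<Rightarrow> 'a set" where
  "posp X = {e. X e = Pos}"

definition negp :: "'a signed \<Rightarrow> 'a set" where
  "negp X = {e. X e = Neg}"

definition zero_signed :: "'a signed" where
  "zero_signed = (\<lambda>_. Zero)"

definition neg_signed :: "'a signed \<Rightarrow> 'a signed" where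
  "neg_signed X = (\<lambda>e. sneg (X e))"

definition oriented_matroid :: "'a set \<Rightarrow> 'a signed set \<Rightarrow> bool" where
  "oriented_matroid E C \<longleftrightarrow>
     finite E \<and>
     (\<forall>X\<in>C. supp X \<subseteq> E) \<and>
     zero_signed \<notin> C \<and>
     (\<forall>X\<in>C. neg_signed X \<in> C) \<and>
     (\<forall>X\<in>C. \<forall>Y\<in>C. supp X \<subseteq> supp Y \<longrightarrow> X = Y \<or> X = neg_signed Y) \<and>
     (\<forall>X\<in>C. \<forall>Y\<in>C. \<forall>e. X \<noteq> neg_signed Y \<and> X e = Pos \<and> Y e = Neg \<longrightarrow>
        (\<exists>Z\<in>C. posp Z \<subseteq> (posp X \<union> posp Y) - {e} \<and>
                negp Z \<subseteq> (negp X \<union> negp Y) - {e}))"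

definition independent :: "'a set \<Rightarrow> 'a signed set \<Rightarrow> 'a set \<Rightarrow> bool" where
  "independent E C A \<longleftrightarrow> A \<subseteq> E \<and> \<not> (\<exists>X\<in>C. supp X \<subseteq> A)"

definition basis :: "'a set \<Rightarrow> 'a signed set \<Rightarrow> 'a set \<Rightarrow> bool" where
  "basis E C B \<longleftrightarrow> independent E C B \<and>
     (\<forall>A. independent E C A \<longrightarrow> B \<subseteq> A \<longrightarrow> A = B)"

definition uniform :: "'a set \<Rightarrow> 'a signed set \<Rightarrow> bool" where
  "uniform E C \<longleftrightarrow>
     (\<forall>B A. basis E C B \<longrightarrow> A \<subseteq> E \<longrightarrow> card A = card B \<longrightarrow> basis E C A)"

definition orthogonal :: "'a signed \<Rightarrow> 'a signed \<Rightarrow> bool" where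
  "orthogonal X Y \<longleftrightarrow> supp X \<inter> supp Y = {} \<or>
     (\<exists>e f. smult (X e) (Y e) = Pos \<and> smult (X f) (Y f) = Neg)"

definition covector_cand :: "'a set \<Rightarrow> 'a signed set \<Rightarrow> 'a signed \<Rightarrow> bool" where
  "covector_cand E C D \<longleftrightarrow> D \<noteq> zero_signed \<and> supp D \<subseteq> E \<and> (\<forall>X\<in>C. orthogonal D X)"

definition cocircuits :: "'a set \<Rightarrow> 'a signed set \<Rightarrow> 'a signed set" where
  "cocircuits E C = {D. covector_cand E C D \<and>
     \<not> (\<exists>D'. covector_cand E C D' \<and> supp D' \<subset> supp D)}"

definition fund_circuit :: "'a signed set \<Rightarrow> 'a set \<Rightarrow> 'a \<Rightarrow> 'a signed" where
  "fund_circuit C B e = (THE X. X \<in> C \<and> X e = Pos \<and> supp X \<subseteq> insert e B)"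

section \<open>Single-element extensions; the new element q is None\<close>

definition lift :: "'a signed \<Rightarrow> sign \<Rightarrow> 'a option signed" where
  "lift Y s = (\<lambda>x. case x of None \<Rightarrow> s | Some e \<Rightarrow> Y e)"

definition ext_ground :: "'a set \<Rightarrow> 'a option set" where
  "ext_ground E = insert None (Some ` E)"

definition lex_loc :: "sign \<Rightarrow> 'a \<Rightarrow> 'a signed \<Rightarrow> sign" where
  "lex_loc s e D = smult s (D e)"

definition lex_extension ::
  "'a set \<Rightarrow> 'a signed set \<Rightarrow> 'a option signed set \<Rightarrow> sign \<Rightarrow> 'a \<Rightarrow> bool" where
  "lex_extension E C Ch s e \<longleftrightarrow>
     oriented_matroid (ext_ground E) Ch \<and>
     {X \<in> Ch. X None = Zero} = (\<lambda>Y. lift Y Zero) ` C \<and>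
     (\<forall>Y\<in>cocircuits E C. lift Y (lex_loc s e Y) \<in> cocircuits (ext_ground E) Ch)"

section \<open>P-matroids: s_i = Inl i, t_i = Inr i\<close>

definition E2n :: "nat \<Rightarrow> (nat + nat) set" where
  "E2n n = Inl ` {..<n} \<union> Inr ` {..<n}"

definition Sset :: "nat \<Rightarrow> (nat + nat) set" where
  "Sset n = Inl ` {..<n}"

definition P_matroid :: "nat \<Rightarrow> (nat + nat) signed set \<Rightarrow> bool" where
  "P_matroid n C \<longleftrightarrow> oriented_matroid (E2n n) C \<and> basis (E2n n) C (Sset n) \<and>
     \<not> (\<exists>X\<in>C. \<forall>i<n. {Inl i, Inr i} \<subseteq> supp X \<longrightarrow> X (Inl i) = sneg (X (Inr i)))"

text \<open>Vertices v of {0,1}^n are encoded as v :: nat => bool (True = 1);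
  only v j for j < n matters.\<close>
definition Bv :: "nat \<Rightarrow> (nat \<Rightarrow> bool) \<Rightarrow> (nat + nat) set" where
  "Bv n v = {Inl j |j. j < n \<and> \<not> v j} \<union> {Inr j |j. j < n \<and> v j}"

definition puso ::
  "nat \<Rightarrow> (nat + nat) option signed set \<Rightarrow> (nat \<Rightarrow> bool) \<Rightarrow> nat \<Rightarrow> sign" where
  "puso n Ch v j =
     (let X = fund_circuit Ch (Some ` Bv n v) None;
          e = (if v j then Some (Inr j) else Some (Inl j))
      in (case X e of Neg \<Rightarrow> Pos | Pos \<Rightarrow> Neg | Zero \<Rightarrow> Zero))"

end

theory Submission
  imports Defs
begin


lemma sneg_sneg[simp]: "sneg (sneg x) = x" by (cases x) auto
lemma sneg_Zero_iff[simp]: "sneg x = Zero \<longleftrightarrow> x = Zero" by (cases x) auto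
lemma neg_neg[simp]: "neg_signed (neg_signed X) = X" by (simp add: neg_signed_def)
lemma neg_app[simp]: "neg_signed X k = sneg (X k)" by (simp add: neg_signed_def)
lemma supp_neg[simp]: "supp (neg_signed X) = supp X" by (simp add: supp_def)
lemma in_supp: "k \<in> supp X \<longleftrightarrow> X k \<noteq> Zero" by (simp add: supp_def)
lemma smult_Zero_iff[simp]: "smult x y = Zero \<longleftrightarrow> x = Zero \<or> y = Zero" by (cases x; cases y) auto
lemma smult_x_Zero[simp]: "smult x Zero = Zero" by (cases x) auto
lemma Zero_sneg_iff[simp]: "Zero = sneg x \<longleftrightarrow> x = Zero" by (cases x) auto
lemma smult_comm: "smult x y = smult y x" by (cases x; cases y) auto

definition conf :: "'a signed \<Rightarrow> 'a signed \<Rightarrow> 'a signed \<Rightarrow> bool" where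
  "conf Z X Y \<longleftrightarrow> (\<forall>k. Z k = Zero \<or> Z k = X k \<or> Z k = Y k)"

lemma om_fin: "oriented_matroid E C \<Longrightarrow> finite E" by (simp add: oriented_matroid_def)
lemma om_supp: "oriented_matroid E C \<Longrightarrow> X \<in> C \<Longrightarrow> supp X \<subseteq> E" by (simp add: oriented_matroid_def)
lemma om_neg: "oriented_matroid E C \<Longrightarrow> X \<in> C \<Longrightarrow> neg_signed X \<in> C" by (simp add: oriented_matroid_def)
lemma om_inc: "oriented_matroid E C \<Longrightarrow> X \<in> C \<Longrightarrow> Y \<in> C \<Longrightarrow> supp X \<subseteq> supp Y \<Longrightarrow> X = Y \<or> X = neg_signed Y"
  by (simp add: oriented_matroid_def)
lemma om_nz: "oriented_matroid E C \<Longrightarrow> X \<in> C \<Longrightarrow> \<exists>k. X k \<noteq> Zero"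
proof (rule ccontr)
  assume "oriented_matroid E C" "X \<in> C" "\<not> (\<exists>k. X k \<noteq> Zero)"
  then have "X = zero_signed" by (auto simp: zero_signed_def)
  then show False using \<open>oriented_matroid E C\<close> \<open>X \<in> C\<close> by (simp add: oriented_matroid_def)
qed
lemma om_finsupp: "oriented_matroid E C \<Longrightarrow> X \<in> C \<Longrightarrow> finite (supp X)"
  using om_fin om_supp finite_subset by metis

lemma elim_pos:
  assumes om: "oriented_matroid E C" and X: "X \<in> C" and Y: "Y \<in> C"
    and ne: "X \<noteq> neg_signed Y" and "X e = Pos" and "Y e = Neg"
  shows "\<exists>Z\<in>C. Z e = Zero \<and> conf Z X Y"
proof -
  obtain Z where Z: "Z \<in> C" "posp Z \<subseteq> (posp X \<union> posp Y) - {e}" "negp Z \<subseteq> (negp X \<union> negp Y) - {e}"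
    using om X Y ne assms(5,6) unfolding oriented_matroid_def by blast
  have "Z e = Zero"
    using Z(2,3) by (cases "Z e") (auto simp: posp_def negp_def)
  moreover have "conf Z X Y"
    unfolding conf_def
  proof
    fix k show "Z k = Zero \<or> Z k = X k \<or> Z k = Y k"
      using Z(2,3) by (cases "Z k") (auto simp: posp_def negp_def)
  qed
  ultimately show ?thesis using Z(1) by blast
qed

lemma elim:
  assumes om: "oriented_matroid E C" and X: "X \<in> C" and Y: "Y \<in> C"
    and ne: "X \<noteq> neg_signed Y" and "X e \<noteq> Zero" and "Y e = sneg (X e)"
  shows "\<exists>Z\<in>C. Z e = Zero \<and> conf Z X Y"
proof (cases "X e")
  case Pos
  then show ?thesis using elim_pos[OF om X Y ne] assms by simp
next
  case Neg
  have ne2: "Y \<noteq> neg_signed X" using ne by auto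
  obtain Z where "Z \<in> C" "Z e = Zero" "conf Z Y X"
    using elim_pos[OF om Y X ne2] Neg assms by auto
  then show ?thesis by (auto simp: conf_def)
qed (use assms in auto)

lemma SE:
  assumes om: "oriented_matroid E C"
  shows "X \<in> C \<Longrightarrow> Y \<in> C \<Longrightarrow> X e \<noteq> Zero \<Longrightarrow> Y e = sneg (X e) \<Longrightarrow> X f \<noteq> Zero \<Longrightarrow> Y f = Zero
    \<Longrightarrow> \<exists>Z\<in>C. Z e = Zero \<and> Z f \<noteq> Zero \<and> conf Z X Y"
proof (induction "card (supp X \<union> supp Y)" arbitrary: X Y e f rule: less_induct)
  case less
  note IH = less.hyps
  have XC: "X \<in> C" and YC: "Y \<in> C" and Xe: "X e \<noteq> Zero" and Ye: "Y e = sneg (X e)"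
    and Xf: "X f \<noteq> Zero" and Yf: "Y f = Zero" using less.prems by auto
  have fin: "finite (supp X \<union> supp Y)" using om_finsupp[OF om XC] om_finsupp[OF om YC] by simp
  have XnY: "X \<noteq> neg_signed Y" using Xf Yf by auto
  obtain Z1 where Z1: "Z1 \<in> C" "Z1 e = Zero" "conf Z1 X Y" using elim[OF om XC YC XnY Xe Ye] by blast
  show ?case
  proof (cases "Z1 f = Zero")
    case False then show ?thesis using Z1 by blast
  next
    case Z1f: True
    have "\<not> supp Z1 \<subseteq> supp X"
    proof
      assume "supp Z1 \<subseteq> supp X"
      then have "Z1 = X \<or> Z1 = neg_signed X" using om_inc[OF om Z1(1) XC] by blast
      then show False using Z1(2) Xe by auto
    qed
    then obtain g where g: "Z1 g \<noteq> Zero" "X g = Zero" by (auto simp: supp_def)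
    have "Z1 g = Zero \<or> Z1 g = X g \<or> Z1 g = Y g" using Z1(3) by (simp add: conf_def)
    then have Yg: "Y g = Z1 g" using g by auto
    have sZ1: "supp Z1 \<subseteq> supp X \<union> supp Y" using Z1(3) unfolding conf_def supp_def by auto
    have c1: "card (supp Y \<union> supp (neg_signed Z1)) < card (supp X \<union> supp Y)"
    proof (rule psubset_card_mono[OF fin])
      show "supp Y \<union> supp (neg_signed Z1) \<subset> supp X \<union> supp Y"
        using sZ1 Xf Yf Z1f by (auto simp: supp_def)
    qed
    have "neg_signed Z1 \<in> C" using om_neg[OF om Z1(1)] .
    then obtain Y' where Y': "Y' \<in> C" "Y' g = Zero" "Y' e \<noteq> Zero" "conf Y' Y (neg_signed Z1)"
      using IH[OF c1 YC \<open>neg_signed Z1 \<in> C\<close>, of g e] g(1) Yg Ye Xe Z1(2) by (simp add: Yg) blast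
    have Y'e: "Y' e = Y e" using Y'(3,4) Z1(2) unfolding conf_def by auto
    have Y'f: "Y' f = Zero" using Y'(4) Yf Z1f unfolding conf_def by auto
    have sY': "supp Y' \<subseteq> (supp Y \<union> supp Z1) - {g}"
      using Y'(2,4) unfolding conf_def supp_def by auto
    have c2: "card (supp X \<union> supp Y') < card (supp X \<union> supp Y)"
    proof (rule psubset_card_mono[OF fin])
      show "supp X \<union> supp Y' \<subset> supp X \<union> supp Y"
        using sY' sZ1 g Yg by (auto simp: supp_def)
    qed
    obtain W where W: "W \<in> C" "W e = Zero" "W f \<noteq> Zero" "conf W X Y'"
      using IH[OF c2 XC Y'(1) Xe _ Xf Y'f] Y'e Ye by simp blast
    have rep: "\<And>W. W \<in> C \<Longrightarrow> W e = Zero \<Longrightarrow> W f \<noteq> Zero \<Longrightarrow> supp W \<subseteq> supp X \<union> supp Y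
      \<Longrightarrow> (\<forall>k. W k = Zero \<or> W k = X k \<or> W k = Y k \<or> W k = sneg (Z1 k))
      \<Longrightarrow> \<exists>Z\<in>C. Z e = Zero \<and> Z f \<noteq> Zero \<and> conf Z X Y"
    proof -
      fix W
      show "W \<in> C \<Longrightarrow> W e = Zero \<Longrightarrow> W f \<noteq> Zero \<Longrightarrow> supp W \<subseteq> supp X \<union> supp Y
      \<Longrightarrow> (\<forall>k. W k = Zero \<or> W k = X k \<or> W k = Y k \<or> W k = sneg (Z1 k))
      \<Longrightarrow> \<exists>Z\<in>C. Z e = Zero \<and> Z f \<noteq> Zero \<and> conf Z X Y"
      proof (induction "card {k. W k \<noteq> Zero \<and> W k \<noteq> X k \<and> W k \<noteq> Y k}" arbitrary: W rule: less_induct)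
        case less
        show ?case
        proof (cases "{k. W k \<noteq> Zero \<and> W k \<noteq> X k \<and> W k \<noteq> Y k} = {}")
          case True
          then show ?thesis using less.prems unfolding conf_def by blast
        next
          case False
          then obtain k where k: "W k \<noteq> Zero" "W k \<noteq> X k" "W k \<noteq> Y k" by blast
          have Wk: "W k = sneg (Z1 k)" using k less.prems(5) by blast
          have c3: "card (supp W \<union> supp Z1) < card (supp X \<union> supp Y)"
          proof (rule psubset_card_mono[OF fin])
            show "supp W \<union> supp Z1 \<subset> supp X \<union> supp Y"
              using less.prems(2,4) sZ1 Z1(2) Xe by (auto simp: supp_def)
          qed
          obtain W2 where W2: "W2 \<in> C" "W2 k = Zero" "W2 f \<noteq> Zero" "conf W2 W Z1"
            using IH[OF c3 less.prems(1) Z1(1) k(1) _ less.prems(3) Z1f] Wk by simp blast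
          have "W2 e = Zero \<or> W2 e = W e \<or> W2 e = Z1 e" using W2(4) by (simp add: conf_def)
          then have W2e: "W2 e = Zero" using less.prems(2) Z1(2) by auto
          have sW2: "supp W2 \<subseteq> supp X \<union> supp Y"
          proof
            fix j assume "j \<in> supp W2"
            then have "W j \<noteq> Zero \<or> Z1 j \<noteq> Zero" using W2(4) unfolding conf_def supp_def by force
            then show "j \<in> supp X \<union> supp Y" using less.prems(4) sZ1 unfolding supp_def by blast
          qed
          have vW2: "\<forall>j. W2 j = Zero \<or> W2 j = X j \<or> W2 j = Y j \<or> W2 j = sneg (Z1 j)"
          proof
            fix j
            have a: "W2 j = Zero \<or> W2 j = W j \<or> W2 j = Z1 j" using W2(4) by (simp add: conf_def)
            have b: "Z1 j = Zero \<or> Z1 j = X j \<or> Z1 j = Y j" using Z1(3) by (simp add: conf_def)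
            have c: "W j = Zero \<or> W j = X j \<or> W j = Y j \<or> W j = sneg (Z1 j)" using less.prems(5) by simp
            show "W2 j = Zero \<or> W2 j = X j \<or> W2 j = Y j \<or> W2 j = sneg (Z1 j)" using a b c by auto
          qed
          have finbad: "finite {k. W k \<noteq> Zero \<and> W k \<noteq> X k \<and> W k \<noteq> Y k}"
            using om_finsupp[OF om less.prems(1)] by (rule finite_subset[rotated]) (auto simp: supp_def)
          have "{j. W2 j \<noteq> Zero \<and> W2 j \<noteq> X j \<and> W2 j \<noteq> Y j} \<subset> {k. W k \<noteq> Zero \<and> W k \<noteq> X k \<and> W k \<noteq> Y k}"
          proof
            show "{j. W2 j \<noteq> Zero \<and> W2 j \<noteq> X j \<and> W2 j \<noteq> Y j} \<subseteq> {k. W k \<noteq> Zero \<and> W k \<noteq> X k \<and> W k \<noteq> Y k}"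
            proof
              fix j assume "j \<in> {j. W2 j \<noteq> Zero \<and> W2 j \<noteq> X j \<and> W2 j \<noteq> Y j}"
              then show "j \<in> {k. W k \<noteq> Zero \<and> W k \<noteq> X k \<and> W k \<noteq> Y k}"
              proof -
                have a: "W2 j = Zero \<or> W2 j = W j \<or> W2 j = Z1 j" using W2(4) by (simp add: conf_def)
                have b: "Z1 j = Zero \<or> Z1 j = X j \<or> Z1 j = Y j" using Z1(3) by (simp add: conf_def)
                show ?thesis using a b \<open>j \<in> _\<close> by auto
              qed
            qed
            show "{j. W2 j \<noteq> Zero \<and> W2 j \<noteq> X j \<and> W2 j \<noteq> Y j} \<noteq> {k. W k \<noteq> Zero \<and> W k \<noteq> X k \<and> W k \<noteq> Y k}"
              using k W2(2) by blast
          qed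
          then have "card {j. W2 j \<noteq> Zero \<and> W2 j \<noteq> X j \<and> W2 j \<noteq> Y j} < card {k. W k \<noteq> Zero \<and> W k \<noteq> X k \<and> W k \<noteq> Y k}"
            by (rule psubset_card_mono[OF finbad])
          then show ?thesis using less.hyps[OF _ W2(1) W2e W2(3) sW2 vW2] by blast
        qed
      qed
    qed
    show ?thesis
    proof (rule rep[OF W(1,2,3)])
      show "supp W \<subseteq> supp X \<union> supp Y"
      proof
        fix j assume "j \<in> supp W"
        then have "X j \<noteq> Zero \<or> Y' j \<noteq> Zero" using W(4) unfolding conf_def supp_def by force
        then show "j \<in> supp X \<union> supp Y" using sY' sZ1 unfolding supp_def by blast
      qed
      show "\<forall>k. W k = Zero \<or> W k = X k \<or> W k = Y k \<or> W k = sneg (Z1 k)"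
      proof
        fix k
        have a: "W k = Zero \<or> W k = X k \<or> W k = Y' k" using W(4) by (simp add: conf_def)
        have b: "Y' k = Zero \<or> Y' k = Y k \<or> Y' k = sneg (Z1 k)" using Y'(4) by (simp add: conf_def)
        show "W k = Zero \<or> W k = X k \<or> W k = Y k \<or> W k = sneg (Z1 k)" using a b by auto
      qed
    qed
  qed
qed




lemma indep_noc: "independent E C B \<Longrightarrow> X \<in> C \<Longrightarrow> \<not> supp X \<subseteq> B"
  by (auto simp: independent_def)

lemma basis_indep: "basis E C B \<Longrightarrow> independent E C B" by (simp add: basis_def)
lemma basis_sub: "basis E C B \<Longrightarrow> B \<subseteq> E" by (simp add: basis_def independent_def)

lemma basis_dep:
  assumes "basis E C B" "f \<in> E" "f \<notin> B"
  shows "\<exists>X\<in>C. supp X \<subseteq> insert f B"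
proof (rule ccontr)
  assume "\<not> ?thesis"
  then have "independent E C (insert f B)" using assms basis_sub[OF assms(1)] by (auto simp: independent_def)
  then have "insert f B = B" using assms(1) unfolding basis_def by blast
  then show False using assms by auto
qed

lemma fc_ex:
  assumes om: "oriented_matroid E C" and b: "basis E C B" and f: "f \<in> E" "f \<notin> B"
  shows "\<exists>X\<in>C. X f = Pos \<and> supp X \<subseteq> insert f B"
proof -
  obtain X where X: "X \<in> C" "supp X \<subseteq> insert f B" using basis_dep[OF b f] by blast
  have "X f \<noteq> Zero"
  proof
    assume "X f = Zero"
    then have "supp X \<subseteq> B" using X(2) by (auto simp: supp_def)
    then show False using indep_noc[OF basis_indep[OF b] X(1)] by blast
  qed
  show ?thesis
  proof (cases "X f")
    case Neg
    then show ?thesis using X om_neg[OF om X(1)] by (intro bexI[of _ "neg_signed X"]) auto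
  qed (use X \<open>X f \<noteq> Zero\<close> in auto)
qed

lemma fc_uniq:
  assumes om: "oriented_matroid E C" and i: "independent E C B" and f: "f \<notin> B"
    and X: "X \<in> C" "X f = Pos" "supp X \<subseteq> insert f B"
    and Y: "Y \<in> C" "Y f = Pos" "supp Y \<subseteq> insert f B"
  shows "X = Y"
proof (rule ccontr)
  assume ne: "X \<noteq> Y"
  have "X \<noteq> neg_signed (neg_signed Y)" using ne by simp
  moreover have "neg_signed Y \<in> C" using om_neg[OF om Y(1)] .
  ultimately obtain Z where Z: "Z \<in> C" "Z f = Zero" "conf Z X (neg_signed Y)"
    using elim[OF om X(1), of "neg_signed Y" f] X(2) Y(2) by auto
  have "supp Z \<subseteq> B"
  proof
    fix k assume "k \<in> supp Z"
    then have "Z k \<noteq> Zero" by (simp add: supp_def)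
    moreover have "Z k = Zero \<or> Z k = X k \<or> Z k = sneg (Y k)" using Z(3) by (simp add: conf_def)
    ultimately have "k \<in> supp X \<or> k \<in> supp Y" by (auto simp: supp_def)
    then show "k \<in> B" using X(3) Y(3) \<open>Z k \<noteq> Zero\<close> Z(2) by auto
  qed
  then show False using indep_noc[OF i Z(1)] by blast
qed

lemma fc_eq:
  assumes om: "oriented_matroid E C" and i: "independent E C B" and f: "f \<notin> B"
    and X: "X \<in> C" "X f = Pos" "supp X \<subseteq> insert f B"
  shows "fund_circuit C B f = X"
  unfolding fund_circuit_def
  by (rule the_equality) (use X fc_uniq[OF om i f] in auto)

lemma fc_props:
  assumes om: "oriented_matroid E C" and b: "basis E C B" and f: "f \<in> E" "f \<notin> B"
  shows "fund_circuit C B f \<in> C" "fund_circuit C B f f = Pos" "supp (fund_circuit C B f) \<subseteq> insert f B"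
proof -
  obtain X where X: "X \<in> C" "X f = Pos" "supp X \<subseteq> insert f B" using fc_ex[OF om b f] by blast
  have "fund_circuit C B f = X" using fc_eq[OF om basis_indep[OF b] f(2) X] .
  then show "fund_circuit C B f \<in> C" "fund_circuit C B f f = Pos" "supp (fund_circuit C B f) \<subseteq> insert f B"
    using X by auto
qed

lemma fc_pm:
  assumes om: "oriented_matroid E C" and i: "independent E C B" and f: "f \<notin> B"
    and X: "X \<in> C" "X f \<noteq> Zero" "supp X \<subseteq> insert f B"
  shows "X = fund_circuit C B f \<or> X = neg_signed (fund_circuit C B f)"
proof (cases "X f")
  case Pos
  then show ?thesis using fc_eq[OF om i f X(1) _ X(3)] by simp
next
  case Neg
  have "fund_circuit C B f = neg_signed X"
    using fc_eq[OF om i f om_neg[OF om X(1)]] Neg X(3) by simp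
  then show ?thesis by simp
qed (use X in auto)

lemma exchange:
  assumes om: "oriented_matroid E C" and b: "basis E C B" and x: "x \<in> B" and y: "y \<in> E" "y \<notin> B"
    and i: "independent E C (insert y (B - {x}))"
  shows "basis E C (insert y (B - {x}))"
  unfolding basis_def
proof (intro conjI allI impI)
  show "independent E C (insert y (B - {x}))" by (rule i)
  fix A assume A: "independent E C A" "insert y (B - {x}) \<subseteq> A"
  show "A = insert y (B - {x})"
  proof (rule ccontr)
    assume "A \<noteq> insert y (B - {x})"
    then obtain z where z: "z \<in> A" "z \<notin> insert y (B - {x})" using A(2) by blast
    obtain Cy where Cy: "Cy \<in> C" "Cy y = Pos" "supp Cy \<subseteq> insert y B" using fc_ex[OF om b y] by blast
    show False
    proof (cases "z = x")
      case True
      then have "supp Cy \<subseteq> A" using Cy(3) A(2) z by auto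
      then show False using indep_noc[OF A(1) Cy(1)] by blast
    next
      case False
      have zE: "z \<in> E" using A(1) z(1) by (auto simp: independent_def)
      have zB: "z \<notin> B" using z False by auto
      obtain Cz where Cz: "Cz \<in> C" "Cz z = Pos" "supp Cz \<subseteq> insert z B" using fc_ex[OF om b zE zB] by blast
      have xCy: "Cy x \<noteq> Zero"
      proof
        assume "Cy x = Zero"
        then have "supp Cy \<subseteq> insert y (B - {x})" using Cy(3) by (auto simp: supp_def)
        then show False using indep_noc[OF i Cy(1)] by blast
      qed
      have xCz: "Cz x \<noteq> Zero"
      proof
        assume "Cz x = Zero"
        then have "supp Cz \<subseteq> A" using Cz(3) A(2) z by (auto simp: supp_def)
        then show False using indep_noc[OF A(1) Cz(1)] by blast
      qed
      define Cz' where "Cz' = (if Cz x = Cy x then neg_signed Cz else Cz)"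
      have Cz'C: "Cz' \<in> C" using om_neg[OF om Cz(1)] Cz(1) by (simp add: Cz'_def)
      have Cz'x: "Cz' x = sneg (Cy x)" using xCy xCz
        unfolding Cz'_def by (cases "Cz x"; cases "Cy x") simp_all
      have yCz: "Cz y = Zero" using Cz(3) y z by (auto simp: supp_def)
      have "Cy \<noteq> neg_signed Cz'" 
      proof
        assume "Cy = neg_signed Cz'"
        then have "Cy y = sneg (Cz' y)" by simp
        then show False using yCz Cy(2) by (simp add: Cz'_def split: if_splits)
      qed
      then obtain W where W: "W \<in> C" "W x = Zero" "conf W Cy Cz'"
        using elim[OF om Cy(1) Cz'C _ xCy Cz'x] by blast
      have "supp W \<subseteq> A"
      proof
        fix k assume "k \<in> supp W"
        then have "W k \<noteq> Zero" by (simp add: supp_def)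
        moreover have "W k = Zero \<or> W k = Cy k \<or> W k = Cz' k" using W(3) by (simp add: conf_def)
        moreover have "supp Cz' = supp Cz" by (simp add: Cz'_def split: if_splits)
        ultimately have "k \<in> supp Cy \<or> k \<in> supp Cz'" unfolding in_supp by metis
        then have "k \<in> supp Cy \<or> k \<in> supp Cz" using \<open>supp Cz' = supp Cz\<close> by simp
        then have "k \<in> insert y B \<or> k \<in> insert z B" using Cy(3) Cz(3) by blast
        moreover have "k \<noteq> x" using W(2) \<open>W k \<noteq> Zero\<close> by auto
        ultimately show "k \<in> A" using A(2) z(1) by blast
      qed
      then show False using indep_noc[OF A(1) W(1)] by blast
    qed
  qed
qed




definition fcoc :: "'a set \<Rightarrow> 'a signed set \<Rightarrow> 'a set \<Rightarrow> 'a \<Rightarrow> 'a signed" where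
  "fcoc E C B e = (\<lambda>k. if k = e then Pos else if k \<in> E \<and> k \<notin> B then sneg (fund_circuit C B k e) else Zero)"

definition agree :: "'a signed \<Rightarrow> 'a signed \<Rightarrow> bool" where
  "agree D X \<longleftrightarrow> (\<forall>k. X k = Zero \<or> D k = Zero \<or> X k = D k) \<and> (\<exists>k. X k \<noteq> Zero \<and> X k = D k)"

lemma smult_notNeg: "smult d x \<noteq> Neg \<Longrightarrow> x = Zero \<or> d = Zero \<or> x = d"
  by (cases d; cases x) auto
lemma smult_notPos: "smult d x \<noteq> Pos \<Longrightarrow> x = Zero \<or> d = Zero \<or> sneg x = d"
  by (cases d; cases x) auto

lemma not_orth_agree:
  assumes "\<not> orthogonal D X"
  shows "agree D X \<or> agree D (neg_signed X)"
proof -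
  have ne: "supp D \<inter> supp X \<noteq> {}"
    and nomix: "\<And>a b. \<not> (smult (D a) (X a) = Pos \<and> smult (D b) (X b) = Neg)"
    using assms unfolding orthogonal_def by blast+
  obtain a where a: "D a \<noteq> Zero" "X a \<noteq> Zero" using ne by (auto simp: supp_def)
  show ?thesis
  proof (cases "X a = D a")
    case True
    then have pa: "smult (D a) (X a) = Pos" using a by (cases "D a") auto
    have "\<forall>k. X k = Zero \<or> D k = Zero \<or> X k = D k"
    proof
      fix k show "X k = Zero \<or> D k = Zero \<or> X k = D k"
        using nomix[of a k] pa smult_notNeg by blast
    qed
    then have "agree D X" unfolding agree_def using True a by blast
    then show ?thesis ..
  next
    case False
    then have pa: "smult (D a) (X a) = Neg" using a by (cases "D a"; cases "X a") auto
    have "\<forall>k. neg_signed X k = Zero \<or> D k = Zero \<or> neg_signed X k = D k"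
    proof
      fix k show "neg_signed X k = Zero \<or> D k = Zero \<or> neg_signed X k = D k"
        using nomix[of k a] pa smult_notPos by simp
    qed
    moreover have "neg_signed X a \<noteq> Zero \<and> neg_signed X a = D a"
      using a False by (cases "D a"; cases "X a") auto
    ultimately have "agree D (neg_signed X)" unfolding agree_def by blast
    then show ?thesis ..
  qed
qed

lemma orth_single:
  assumes "orthogonal D X" "supp D \<inter> supp X \<subseteq> {a}"
  shows "supp D \<inter> supp X = {}"
proof (rule ccontr)
  assume "supp D \<inter> supp X \<noteq> {}"
  then obtain e f where ef: "smult (D e) (X e) = Pos" "smult (D f) (X f) = Neg"
    using assms(1) unfolding orthogonal_def by blast
  then have "e \<in> supp D \<inter> supp X" "f \<in> supp D \<inter> supp X"
    by (auto simp: supp_def)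
  then have "e = f" using assms(2) by blast
  then show False using ef by simp
qed

lemma fco_noagree:
  assumes om: "oriented_matroid E C" and b: "basis E C B" and eB: "e \<in> B"
  shows "X \<in> C \<Longrightarrow> \<not> agree (fcoc E C B e) X"
proof (induction "card (supp X - B)" arbitrary: X rule: less_induct)
  case less
  have XC: "X \<in> C" using less.prems .
  have i: "independent E C B" using basis_indep[OF b] .
  have Dk: "\<And>k. fcoc E C B e k \<noteq> Zero \<Longrightarrow> k = e \<or> (k \<in> E \<and> k \<notin> B)"
    by (auto simp: fcoc_def split: if_splits)
  have De: "fcoc E C B e e = Pos" by (simp add: fcoc_def)
  have Df: "\<And>f. f \<in> E \<Longrightarrow> f \<notin> B \<Longrightarrow> fcoc E C B e f = sneg (fund_circuit C B f e)"
    using eB by (auto simp: fcoc_def)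
  show ?case
  proof
    assume ag: "agree (fcoc E C B e) X"
    have ag1: "\<And>k. X k = Zero \<or> fcoc E C B e k = Zero \<or> X k = fcoc E C B e k"
      and ag2: "\<exists>k. X k \<noteq> Zero \<and> X k = fcoc E C B e k" using ag unfolding agree_def by blast+
    have fin: "finite (supp X - B)" using om_finsupp[OF om XC] by simp
    define Cf where "Cf = (\<lambda>f. if X f = Pos then neg_signed (fund_circuit C B f) else fund_circuit C B f)"
    have step: "\<And>f g. f \<in> supp X \<Longrightarrow> f \<notin> B \<Longrightarrow> X g \<noteq> Zero \<Longrightarrow> X g = fcoc E C B e g \<Longrightarrow> g \<noteq> f
       \<Longrightarrow> Cf f g = Zero \<Longrightarrow> Cf f e \<noteq> Neg \<Longrightarrow> False"
    proof -
      fix f g assume f: "f \<in> supp X" "f \<notin> B" and g: "X g \<noteq> Zero" "X g = fcoc E C B e g" "g \<noteq> f"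
        and Cfg: "Cf f g = Zero" and Cfe: "Cf f e \<noteq> Neg"
      have fE: "f \<in> E" using om_supp[OF om XC] f(1) by blast
      note fp = fc_props[OF om b fE f(2)]
      have Xf: "X f \<noteq> Zero" using f(1) by (simp add: supp_def)
      have CfC: "Cf f \<in> C" using fp(1) om_neg[OF om fp(1)] by (simp add: Cf_def)
      have Cff: "Cf f f = sneg (X f)" using fp(2) Xf by (cases "X f") (auto simp: Cf_def)
      have sCf: "supp (Cf f) \<subseteq> insert f B" using fp(3) by (simp add: Cf_def)
      obtain Z where Z: "Z \<in> C" "Z f = Zero" "Z g \<noteq> Zero" "conf Z X (Cf f)"
        using SE[OF om XC CfC Xf Cff g(1) Cfg] by blast
      have cZ: "\<And>k. Z k = Zero \<or> Z k = X k \<or> Z k = Cf f k" using Z(4) by (simp add: conf_def)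
      have "supp Z - B \<subset> supp X - B"
      proof
        show "supp Z - B \<subseteq> supp X - B"
        proof
          fix k assume k: "k \<in> supp Z - B"
          then have Zk: "Z k \<noteq> Zero" by (simp add: supp_def)
          show "k \<in> supp X - B"
          proof (cases "Z k = X k")
            case True then show ?thesis using k Zk by (simp add: supp_def)
          next
            case False
            then have "Cf f k \<noteq> Zero" using cZ[of k] Zk by auto
            then have "k \<in> insert f B" using sCf by (auto simp: supp_def)
            then have "k = f" using k by blast
            then show ?thesis using Z(2) Zk by simp
          qed
        qed
        show "supp Z - B \<noteq> supp X - B" using f Z(2) by (auto simp: supp_def)
      qed
      then have card: "card (supp Z - B) < card (supp X - B)" by (rule psubset_card_mono[OF fin])
      have "agree (fcoc E C B e) Z"
        unfolding agree_def
      proof (intro conjI allI)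
        have "Z g = X g" using cZ[of g] Z(3) Cfg by auto
        then show "\<exists>k. Z k \<noteq> Zero \<and> Z k = fcoc E C B e k" using Z(3) g(2) by metis
        fix k
        show "Z k = Zero \<or> fcoc E C B e k = Zero \<or> Z k = fcoc E C B e k"
        proof (cases "Z k = Zero \<or> Z k = X k")
          case True then show ?thesis using ag1[of k] by auto
        next
          case False
          then have ZC: "Z k = Cf f k" "Z k \<noteq> Zero" using cZ[of k] by auto
          show ?thesis
          proof (cases "fcoc E C B e k = Zero")
            case False
            then have "k = e \<or> (k \<in> E \<and> k \<notin> B)" using Dk by blast
            moreover have "k \<in> insert f B" using ZC sCf by (auto simp: supp_def)
            ultimately have "k = e \<or> k = f" by blast
            then show ?thesis
            proof
              assume "k = e"
              then have "Z k = Pos" using ZC Cfe by (cases "Cf f e") auto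
              then show ?thesis using De \<open>k = e\<close> by simp
            next
              assume "k = f" then show ?thesis using Z(2) by simp
            qed
          qed simp
        qed
      qed
      then show False using less.hyps[OF card Z(1)] by blast
    qed
    have ne: "supp X - B \<noteq> {}" using indep_noc[OF i XC] by blast
    show False
    proof (cases "\<exists>f \<in> supp X - B. fcoc E C B e f = Zero")
      case True
      then obtain f where f: "f \<in> supp X" "f \<notin> B" "fcoc E C B e f = Zero" by blast
      have fE: "f \<in> E" using om_supp[OF om XC] f(1) by blast
      have cfe: "fund_circuit C B f e = Zero" using Df[OF fE f(2)] f(3) by simp
      obtain g where g: "X g \<noteq> Zero" "X g = fcoc E C B e g" using ag2 by blast
      have gf: "g \<noteq> f" using g f(3) by auto
      have Cfe: "Cf f e = Zero" using cfe by (simp add: Cf_def)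
      have Cfg: "Cf f g = Zero"
      proof (rule ccontr)
        assume "Cf f g \<noteq> Zero"
        then have "fund_circuit C B f g \<noteq> Zero" by (simp add: Cf_def split: if_splits)
        then have "g \<in> insert f B" using fc_props(3)[OF om b fE f(2)] by (auto simp: supp_def)
        then have "g \<in> B" using gf by blast
        moreover have "fcoc E C B e g \<noteq> Zero" using g by simp
        ultimately have "g = e" using Dk by blast
        then show False using Cfe \<open>Cf f g \<noteq> Zero\<close> by simp
      qed
      show False using step[OF f(1,2) g gf Cfg] Cfe by simp
    next
      case False
      then have allD: "\<And>f. f \<in> supp X \<Longrightarrow> f \<notin> B \<Longrightarrow> fcoc E C B e f \<noteq> Zero" by blast
      obtain f where f: "f \<in> supp X" "f \<notin> B" using ne by blast
      have fE: "f \<in> E" using om_supp[OF om XC] f(1) by blast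
      note fp = fc_props[OF om b fE f(2)]
      have Xf0: "X f \<noteq> Zero" using f(1) by (simp add: supp_def)
      have Xf: "X f = sneg (fund_circuit C B f e)" using ag1[of f] allD[OF f] Xf0 Df[OF fE f(2)] by auto
      have Cfe: "Cf f e = Pos"
        using Xf Xf0 by (cases "fund_circuit C B f e") (auto simp: Cf_def)
      show False
      proof (cases "\<exists>g \<in> supp X - B. g \<noteq> f")
        case True
        then obtain g where g: "g \<in> supp X" "g \<notin> B" "g \<noteq> f" by blast
        have Xg0: "X g \<noteq> Zero" using g(1) by (simp add: supp_def)
        have Xg: "X g = fcoc E C B e g" using ag1[of g] allD[OF g(1,2)] Xg0 by auto
        have Cfg: "Cf f g = Zero"
        proof (rule ccontr)
          assume "Cf f g \<noteq> Zero"
          then have "fund_circuit C B f g \<noteq> Zero" by (simp add: Cf_def split: if_splits)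
          then have "g \<in> insert f B" using fp(3) by (auto simp: supp_def)
          then show False using g by blast
        qed
        show False using step[OF f Xg0 Xg g(3) Cfg] Cfe by simp
      next
        case False
        then have "supp X \<subseteq> insert f B" using f by blast
        then have "X = fund_circuit C B f \<or> X = neg_signed (fund_circuit C B f)"
          using fc_pm[OF om i f(2) XC Xf0] by blast
        then have "X e = Neg"
        proof
          assume X: "X = fund_circuit C B f"
          then have "fund_circuit C B f e = Neg" using Xf fp(2)
            by (cases "fund_circuit C B f e") auto
          then show ?thesis using X by simp
        next
          assume X: "X = neg_signed (fund_circuit C B f)"
          then have "fund_circuit C B f e = Pos" using Xf fp(2)
            by (cases "fund_circuit C B f e") auto
          then show ?thesis using X by simp
        qed
        then show False using ag1[of e] De by simp
      qed
    qed
  qed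
qed

lemma fco_orth:
  assumes om: "oriented_matroid E C" and b: "basis E C B" and eB: "e \<in> B" and X: "X \<in> C"
  shows "orthogonal (fcoc E C B e) X"
  using not_orth_agree fco_noagree[OF om b eB X] fco_noagree[OF om b eB om_neg[OF om X]] by blast

lemma fco_cocircuit:
  assumes om: "oriented_matroid E C" and b: "basis E C B" and eB: "e \<in> B"
  shows "fcoc E C B e \<in> cocircuits E C"
proof -
  let ?D = "fcoc E C B e"
  have BE: "B \<subseteq> E" using basis_sub[OF b] .
  have Dk: "\<And>k. ?D k \<noteq> Zero \<Longrightarrow> k = e \<or> (k \<in> E \<and> k \<notin> B)"
    by (auto simp: fcoc_def split: if_splits)
  have De: "?D e = Pos" by (simp add: fcoc_def)
  have Df: "\<And>f. f \<in> E \<Longrightarrow> f \<notin> B \<Longrightarrow> ?D f = sneg (fund_circuit C B f e)"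
    using eB by (auto simp: fcoc_def)
  have cand: "covector_cand E C ?D"
    unfolding covector_cand_def
  proof (intro conjI ballI)
    show "?D \<noteq> zero_signed" using De by (auto simp: zero_signed_def dest: fun_cong[of _ _ e])
    show "supp ?D \<subseteq> E" using Dk eB BE by (auto simp: supp_def)
    fix X assume "X \<in> C" then show "orthogonal ?D X" by (rule fco_orth[OF om b eB])
  qed
  have minimal: "\<not> (\<exists>D'. covector_cand E C D' \<and> supp D' \<subset> supp ?D)"
  proof
    assume "\<exists>D'. covector_cand E C D' \<and> supp D' \<subset> supp ?D"
    then obtain D' where D': "covector_cand E C D'" "supp D' \<subset> supp ?D" by blast
    have orth: "\<And>X. X \<in> C \<Longrightarrow> orthogonal D' X" using D'(1) by (simp add: covector_cand_def)
    have eD': "e \<in> supp D'"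
    proof (rule ccontr)
      assume ne: "e \<notin> supp D'"
      have "D' \<noteq> zero_signed" using D'(1) by (simp add: covector_cand_def)
      then obtain f where f: "f \<in> supp D'" by (auto simp: zero_signed_def supp_def)
      have "f \<in> supp ?D" using f D'(2) by blast
      then have fEB: "f \<in> E" "f \<notin> B" using Dk f ne by (auto simp: supp_def)
      note fp = fc_props[OF om b fEB]
      have "supp D' \<inter> supp (fund_circuit C B f) \<subseteq> {f}"
      proof
        fix k assume k: "k \<in> supp D' \<inter> supp (fund_circuit C B f)"
        then have "k \<in> insert f B" using fp(3) by blast
        moreover have "k = e \<or> k \<notin> B" using Dk k D'(2) by (auto simp: supp_def)
        ultimately show "k \<in> {f}" using k ne by auto
      qed
      then have "supp D' \<inter> supp (fund_circuit C B f) = {}" by (rule orth_single[OF orth[OF fp(1)]])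
      then show False using f fp(2) by (auto simp: supp_def)
    qed
    have "supp ?D \<subseteq> supp D'"
    proof
      fix k assume k: "k \<in> supp ?D"
      show "k \<in> supp D'"
      proof (rule ccontr)
        assume nk: "k \<notin> supp D'"
        then have "k \<noteq> e" using eD' by blast
        then have kEB: "k \<in> E" "k \<notin> B" using Dk k by (auto simp: supp_def)
        note fp = fc_props[OF om b kEB]
        have ke: "fund_circuit C B k e \<noteq> Zero" using k Df[OF kEB] by (simp add: supp_def)
        have "supp D' \<inter> supp (fund_circuit C B k) \<subseteq> {e}"
        proof
          fix j assume j: "j \<in> supp D' \<inter> supp (fund_circuit C B k)"
          then have "j \<in> insert k B" using fp(3) by blast
          moreover have "j = e \<or> j \<notin> B" using Dk j D'(2) by (auto simp: supp_def)
          ultimately show "j \<in> {e}" using j nk by auto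
        qed
        then have "supp D' \<inter> supp (fund_circuit C B k) = {}" by (rule orth_single[OF orth[OF fp(1)]])
        then show False using eD' ke by (auto simp: supp_def)
      qed
    qed
    then show False using D'(2) by blast
  qed
  show ?thesis unfolding cocircuits_def using cand minimal by blast
qed

lemma fcoc_vals:
  assumes "e \<in> B"
  shows "fcoc E C B e e = Pos" "\<And>b. b \<in> B \<Longrightarrow> b \<noteq> e \<Longrightarrow> fcoc E C B e b = Zero"
    "\<And>k. fcoc E C B e k \<noteq> Zero \<Longrightarrow> k = e \<or> (k \<in> E \<and> k \<notin> B)"
  by (auto simp: fcoc_def split: if_splits)




lemma lift_None[simp]: "lift Y s None = s" by (simp add: lift_def)
lemma lift_Some[simp]: "lift Y s (Some x) = Y x" by (simp add: lift_def)
lemma supp_lift_Zero: "supp (lift Y Zero) = Some ` supp Y"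
proof
  show "supp (lift Y Zero) \<subseteq> Some ` supp Y"
  proof
    fix k assume "k \<in> supp (lift Y Zero)"
    then show "k \<in> Some ` supp Y" by (cases k) (auto simp: supp_def)
  qed
  show "Some ` supp Y \<subseteq> supp (lift Y Zero)" by (auto simp: supp_def)
qed

lemma lex_om: "lex_extension E C Ch s e \<Longrightarrow> oriented_matroid (ext_ground E) Ch"
  by (simp add: lex_extension_def)
lemma lex_liftC: "lex_extension E C Ch s e \<Longrightarrow> Y \<in> C \<Longrightarrow> lift Y Zero \<in> Ch"
proof -
  assume l: "lex_extension E C Ch s e" and Y: "Y \<in> C"
  have "lift Y Zero \<in> (\<lambda>Y. lift Y Zero) ` C" using Y by blast
  also have "\<dots> = {X \<in> Ch. X None = Zero}" using l by (simp add: lex_extension_def)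
  finally show ?thesis by simp
qed
lemma lex_Ch0: "lex_extension E C Ch s e \<Longrightarrow> X \<in> Ch \<Longrightarrow> X None = Zero \<Longrightarrow> \<exists>Y\<in>C. X = lift Y Zero"
proof -
  assume l: "lex_extension E C Ch s e" and X: "X \<in> Ch" "X None = Zero"
  have "X \<in> {X \<in> Ch. X None = Zero}" using X by simp
  also have "\<dots> = (\<lambda>Y. lift Y Zero) ` C" using l by (simp add: lex_extension_def)
  finally show ?thesis by blast
qed
lemma lex_coc: "lex_extension E C Ch s e \<Longrightarrow> Y \<in> cocircuits E C \<Longrightarrow> lift Y (lex_loc s e Y) \<in> cocircuits (ext_ground E) Ch"
  by (simp add: lex_extension_def)

lemma coc_orth: "D \<in> cocircuits E C \<Longrightarrow> X \<in> C \<Longrightarrow> orthogonal D X"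
  by (simp add: cocircuits_def covector_cand_def)

lemma indep_lift:
  assumes l: "lex_extension E C Ch s e" and i: "independent E C A"
  shows "independent (ext_ground E) Ch (Some ` A)"
  unfolding independent_def
proof
  show "Some ` A \<subseteq> ext_ground E" using i by (auto simp: independent_def ext_ground_def)
  show "\<not> (\<exists>X\<in>Ch. supp X \<subseteq> Some ` A)"
  proof
    assume "\<exists>X\<in>Ch. supp X \<subseteq> Some ` A"
    then obtain X where X: "X \<in> Ch" "supp X \<subseteq> Some ` A" by blast
    have "X None = Zero" using X(2) by (auto simp: supp_def)
    then obtain Y where Y: "Y \<in> C" "X = lift Y Zero" using lex_Ch0[OF l X(1)] by blast
    have "supp Y \<subseteq> A" using X(2) Y(2) supp_lift_Zero[of Y] by auto
    then show False using indep_noc[OF i Y(1)] by blast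
  qed
qed

lemma Bv_mem[simp]: "Inl j \<in> Bv n v \<longleftrightarrow> j < n \<and> \<not> v j" "Inr j \<in> Bv n v \<longleftrightarrow> j < n \<and> v j"
  by (auto simp: Bv_def)
lemma Bv_sub: "Bv n v \<subseteq> E2n n" by (auto simp: Bv_def E2n_def)
lemma Bv_alt: "Bv n v = (\<lambda>j. if v j then Inr j else Inl j) ` {..<n}"
  by (auto simp: Bv_def)
lemma Bv_card: "card (Bv n v) = n"
proof -
  have "inj_on (\<lambda>j. if v j then Inr j else Inl j) {..<n}"
    by (auto simp: inj_on_def split: if_splits)
  then have c: "card ((\<lambda>j. if v j then Inr j else Inl j) ` {..<n}) = card {..<n}" by (rule card_image)
  show ?thesis by (simp only: Bv_alt c card_lessThan)
qed
lemma Bv_S: "Bv n (\<lambda>_. False) = Sset n" by (auto simp: Bv_def Sset_def)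
lemma Sset_card: "card (Sset n) = n" by (simp add: Sset_def card_image)
lemma E2n_fin: "finite (E2n n)" by (simp add: E2n_def)

lemma P_om: "P_matroid n C \<Longrightarrow> oriented_matroid (E2n n) C" by (simp add: P_matroid_def)
lemma P_S: "P_matroid n C \<Longrightarrow> basis (E2n n) C (Sset n)" by (simp add: P_matroid_def)
lemma P_cond: "P_matroid n C \<Longrightarrow> X \<in> C \<Longrightarrow> \<exists>j<n. {Inl j, Inr j} \<subseteq> supp X \<and> X (Inl j) \<noteq> sneg (X (Inr j))"
  unfolding P_matroid_def by blast

lemma Bv_indep:
  assumes P: "P_matroid n C"
  shows "independent (E2n n) C (Bv n v)"
  unfolding independent_def
proof
  show "Bv n v \<subseteq> E2n n" by (rule Bv_sub)
  show "\<not> (\<exists>X\<in>C. supp X \<subseteq> Bv n v)"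
  proof
    assume "\<exists>X\<in>C. supp X \<subseteq> Bv n v"
    then obtain X where X: "X \<in> C" "supp X \<subseteq> Bv n v" by blast
    obtain j where "j < n" "{Inl j, Inr j} \<subseteq> supp X" using P_cond[OF P X(1)] by blast
    then have "Inl j \<in> Bv n v" "Inr j \<in> Bv n v" using X(2) by auto
    then show False by simp
  qed
qed

lemma Bv_basis:
  assumes P: "P_matroid n C"
  shows "basis (E2n n) C (Bv n v)"
proof -
  have om: "oriented_matroid (E2n n) C" using P_om[OF P] .
  have main: "finite F \<Longrightarrow> F \<subseteq> {..<n} \<Longrightarrow> basis (E2n n) C (Bv n (\<lambda>j. j \<in> F))" for F
  proof (induction F rule: finite_induct)
    case empty
    then show ?case using P_S[OF P] Bv_S[of n] by simp
  next
    case (insert j F)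
    have jn: "j < n" using insert by auto
    have IH: "basis (E2n n) C (Bv n (\<lambda>k. k \<in> F))" using insert by auto
    have eq: "Bv n (\<lambda>k. k \<in> insert j F) = insert (Inr j) (Bv n (\<lambda>k. k \<in> F) - {Inl j})"
      using jn insert(2) by (auto simp: Bv_def)
    have x: "Inl j \<in> Bv n (\<lambda>k. k \<in> F)" using jn insert(2) by simp
    have y: "Inr j \<in> E2n n" "Inr j \<notin> Bv n (\<lambda>k. k \<in> F)" using jn insert(2) by (auto simp: E2n_def)
    show ?case unfolding eq
      by (rule exchange[OF om IH x y]) (use Bv_indep[OF P, of "\<lambda>k. k \<in> insert j F"] eq in simp)
  qed
  have "Bv n v = Bv n (\<lambda>j. j \<in> {j. j < n \<and> v j})" by (auto simp: Bv_def)
  then show ?thesis using main[of "{j. j < n \<and> v j}"] by auto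
qed

definition Z0 :: "nat \<Rightarrow> (nat + nat) option signed" where
  "Z0 i = (\<lambda>x. if x = None \<or> x = Some (Inr i) then Pos else Zero)"

lemma Z0_in:
  assumes P: "P_matroid n C" and i: "i < n" and lex: "lex_extension (E2n n) C Ch Neg (Inr i)"
  shows "Z0 i \<in> Ch"
proof -
  define E where "E = E2n n"
  define t :: "nat + nat" where "t = Inr i"
  have om: "oriented_matroid E C" using P_om[OF P] by (simp add: E_def)
  have omCh: "oriented_matroid (ext_ground E) Ch" using lex_om[OF lex] by (simp add: E_def)
  define B0 where "B0 = Bv n (\<lambda>j. j = i)"
  have bas0: "basis E C B0" using Bv_basis[OF P] by (simp add: E_def B0_def)
  have ind0: "independent E C B0" using Bv_indep[OF P] by (simp add: E_def B0_def)
  have tB0: "t \<in> B0" using i by (simp add: B0_def t_def)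
  have B0E: "B0 \<subseteq> E" using basis_sub[OF bas0] .
  define D where "D = fcoc E C B0 t"
  have Dcoc: "D \<in> cocircuits E C" using fco_cocircuit[OF om bas0 tB0] by (simp add: D_def)
  have Dt: "D t = Pos" using fcoc_vals(1)[OF tB0] by (simp add: D_def)
  have Dk: "\<And>k. D k \<noteq> Zero \<Longrightarrow> k = t \<or> (k \<in> E \<and> k \<notin> B0)" using fcoc_vals(3)[OF tB0] by (simp add: D_def)
  have liftD: "lift D Neg \<in> cocircuits (ext_ground E) Ch"
    using lex_coc[OF lex Dcoc[unfolded E_def]] Dt by (simp add: lex_loc_def E_def t_def)
  define B1 where "B1 = insert None (Some ` B0)"
  have dep: "\<exists>X\<in>Ch. supp X \<subseteq> B1"
  proof (rule ccontr)
    assume nd: "\<not> (\<exists>X\<in>Ch. supp X \<subseteq> B1)"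
    have ind1: "independent (ext_ground E) Ch B1"
      unfolding independent_def using nd B0E by (auto simp: B1_def ext_ground_def)
    have bas1: "basis (ext_ground E) Ch B1"
      unfolding basis_def
    proof (intro conjI allI impI)
      show "independent (ext_ground E) Ch B1" by (rule ind1)
      fix A assume A: "independent (ext_ground E) Ch A" "B1 \<subseteq> A"
      show "A = B1"
      proof (rule ccontr)
        assume "A \<noteq> B1"
        then obtain a where a: "a \<in> A" "a \<notin> B1" using A(2) by blast
        have "a \<in> ext_ground E" using A(1) a(1) by (auto simp: independent_def)
        then obtain x where x: "a = Some x" "x \<in> E" using a(2) by (auto simp: ext_ground_def B1_def)
        have xB: "x \<notin> B0" using a(2) x(1) by (auto simp: B1_def)
        obtain Y where Y: "Y \<in> C" "supp Y \<subseteq> insert x B0" using basis_dep[OF bas0 x(2) xB] by blast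
        have "supp (lift Y Zero) \<subseteq> A" using Y(2) A(2) a(1) x(1) supp_lift_Zero[of Y] by (auto simp: B1_def)
        then show False using indep_noc[OF A(1) lex_liftC[OF lex Y(1)]] by blast
      qed
    qed
    have NB1: "None \<in> B1" by (simp add: B1_def)
    define D' where "D' = fcoc (ext_ground E) Ch B1 None"
    have D'coc: "D' \<in> cocircuits (ext_ground E) Ch" using fco_cocircuit[OF omCh bas1 NB1] by (simp add: D'_def)
    have D'S: "D' (Some x) = Zero" for x
    proof (cases "x \<in> B0")
      case True
      then show ?thesis using fcoc_vals(2)[OF NB1, of "Some x"] by (simp add: D'_def B1_def)
    next
      case False
      show ?thesis
      proof (cases "x \<in> E")
        case True
        have sx: "Some x \<in> ext_ground E" "Some x \<notin> B1" using True False by (auto simp: ext_ground_def B1_def)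
        obtain Y where Y: "Y \<in> C" "Y x = Pos" "supp Y \<subseteq> insert x B0" using fc_ex[OF om bas0 True False] by blast
        have "fund_circuit Ch B1 (Some x) = lift Y Zero"
        proof (rule fc_eq[OF omCh ind1 sx(2) lex_liftC[OF lex Y(1)]])
          show "lift Y Zero (Some x) = Pos" using Y(2) by simp
          show "supp (lift Y Zero) \<subseteq> insert (Some x) B1" using Y(3) supp_lift_Zero[of Y] by (auto simp: B1_def)
        qed
        then show ?thesis using sx by (simp add: D'_def fcoc_def)
      next
        case False
        then have "Some x \<notin> ext_ground E" by (auto simp: ext_ground_def)
        then show ?thesis by (simp add: D'_def fcoc_def)
      qed
    qed
    have cand: "covector_cand (ext_ground E) Ch D'" using D'coc by (simp add: cocircuits_def)
    have "supp D' \<subset> supp (lift D Neg)"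
    proof
      show "supp D' \<subseteq> supp (lift D Neg)"
      proof
        fix k assume "k \<in> supp D'"
        then have "k = None" using D'S by (cases k) (auto simp: supp_def)
        then show "k \<in> supp (lift D Neg)" by (simp add: supp_def)
      qed
      have "Some t \<in> supp (lift D Neg)" "Some t \<notin> supp D'" using Dt D'S by (auto simp: supp_def)
      then show "supp D' \<noteq> supp (lift D Neg)" by blast
    qed
    then show False using liftD cand unfolding cocircuits_def by blast
  qed
  then obtain X where X: "X \<in> Ch" "supp X \<subseteq> B1" by blast
  have XN: "X None \<noteq> Zero"
  proof
    assume "X None = Zero"
    then obtain Y where Y: "Y \<in> C" "X = lift Y Zero" using lex_Ch0[OF lex X(1)] by blast
    have "supp Y \<subseteq> B0" using X(2) Y(2) supp_lift_Zero[of Y] by (auto simp: B1_def)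
    then show False using indep_noc[OF ind0 Y(1)] by blast
  qed
  define X' where "X' = (if X None = Pos then X else neg_signed X)"
  have X'C: "X' \<in> Ch" using X(1) om_neg[OF omCh X(1)] by (simp add: X'_def)
  have X'N: "X' None = Pos" using XN by (cases "X None") (auto simp: X'_def)
  have sX': "supp X' \<subseteq> B1" using X(2) by (simp add: X'_def)
  have X'b: "X' (Some b) = Zero" if b: "b \<in> B0" "b \<noteq> t" for b
  proof -
    define Db where "Db = fcoc E C B0 b"
    have Dbcoc: "Db \<in> cocircuits E C" using fco_cocircuit[OF om bas0 b(1)] by (simp add: Db_def)
    have Dbt: "Db t = Zero" using fcoc_vals(2)[OF b(1) tB0] b(2) by (simp add: Db_def)
    have Dbb: "Db b = Pos" using fcoc_vals(1)[OF b(1)] by (simp add: Db_def)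
    have Dbk: "\<And>k. Db k \<noteq> Zero \<Longrightarrow> k = b \<or> (k \<in> E \<and> k \<notin> B0)" using fcoc_vals(3)[OF b(1)] by (simp add: Db_def)
    have lc: "lift Db Zero \<in> cocircuits (ext_ground E) Ch"
      using lex_coc[OF lex Dbcoc[unfolded E_def]] Dbt by (simp add: lex_loc_def E_def t_def)
    have orth: "orthogonal (lift Db Zero) X'" using coc_orth[OF lc X'C] .
    have "supp (lift Db Zero) \<inter> supp X' \<subseteq> {Some b}"
    proof
      fix k assume k: "k \<in> supp (lift Db Zero) \<inter> supp X'"
      then have "k \<in> B1" using sX' by blast
      moreover have "k \<noteq> None" using k by (cases k) (auto simp: supp_def)
      ultimately obtain c where c: "k = Some c" "c \<in> B0" by (auto simp: B1_def)
      then have "Db c \<noteq> Zero" using k by (simp add: supp_def)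
      then have "c = b" using Dbk c(2) by blast
      then show "k \<in> {Some b}" using c by simp
    qed
    then have "supp (lift Db Zero) \<inter> supp X' = {}" using orth_single[OF orth] by blast
    moreover have "Some b \<in> supp (lift Db Zero)" using Dbb by (simp add: supp_def)
    ultimately have "Some b \<notin> supp X'" by blast
    then show ?thesis by (simp add: supp_def)
  qed
  have X't: "X' (Some t) = Pos"
  proof -
    have orth: "orthogonal (lift D Neg) X'" using coc_orth[OF liftD X'C] .
    have "None \<in> supp (lift D Neg) \<inter> supp X'" using X'N by (simp add: supp_def)
    then obtain a c where ac: "smult (lift D Neg a) (X' a) = Pos" "smult (lift D Neg c) (X' c) = Neg"
      using orth unfolding orthogonal_def by blast
    have "a \<in> supp X'" using ac(1) by (auto simp: supp_def)
    then have "a \<in> B1" using sX' by blast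
    moreover have "a \<noteq> None" using ac(1) X'N by (cases a) auto
    ultimately obtain c' where c': "a = Some c'" "c' \<in> B0" by (auto simp: B1_def)
    have "D c' \<noteq> Zero" using ac(1) c'(1) by auto
    then have "c' = t" using Dk c'(2) by blast
    then show ?thesis using ac(1) c'(1) Dt by (cases "X' (Some t)") auto
  qed
  have "X' = Z0 i"
  proof
    fix x show "X' x = Z0 i x"
    proof (cases x)
      case None then show ?thesis using X'N by (simp add: Z0_def)
    next
      case (Some c)
      show ?thesis
      proof (cases "c = t")
        case True then show ?thesis using X't Some by (simp add: Z0_def t_def)
      next
        case False
        have "X' (Some c) = Zero"
        proof (cases "c \<in> B0")
          case True then show ?thesis using X'b False by blast
        next
          case False
          then have "Some c \<notin> supp X'" using sX' by (auto simp: B1_def)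
          then show ?thesis by (simp add: supp_def)
        qed
        then show ?thesis using Some False by (simp add: Z0_def t_def)
      qed
    qed
  qed
  then show ?thesis using X'C by simp
qed




lemma fcCh:
  assumes P: "P_matroid n C" and lex: "lex_extension (E2n n) C Ch s e"
    and X: "X \<in> Ch" "X None = Pos" "supp X \<subseteq> insert None (Some ` Bv n v)"
  shows "fund_circuit Ch (Some ` Bv n v) None = X"
  by (rule fc_eq[OF lex_om[OF lex] indep_lift[OF lex Bv_indep[OF P]] _ X]) auto

lemma partbc:
  assumes P: "P_matroid n C" and i: "i < n" and lex: "lex_extension (E2n n) C Ch Neg (Inr i)"
    and w: "\<not> w i"
  shows "\<exists>W Y2. W \<in> Ch \<and> W None = Pos \<and> supp W \<subseteq> insert None (Some ` Bv n w) \<and> Y2 \<in> C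
    \<and> supp Y2 \<subseteq> insert (Inr i) (Bv n w) \<and> Y2 (Inr i) = Neg
    \<and> (\<forall>k. k \<noteq> Inr i \<longrightarrow> Y2 k = Zero \<or> Y2 k = W (Some k))"
proof -
  define t :: "nat + nat" where "t = Inr i"
  define Bw where "Bw = Bv n w"
  have om: "oriented_matroid (E2n n) C" using P_om[OF P] .
  have omCh: "oriented_matroid (ext_ground (E2n n)) Ch" using lex_om[OF lex] .
  have basw: "basis (E2n n) C Bw" using Bv_basis[OF P] by (simp add: Bw_def)
  have indw: "independent (E2n n) C Bw" using Bv_indep[OF P] by (simp add: Bw_def)
  have tBw: "t \<notin> Bw" using w by (simp add: Bw_def t_def)
  have tE: "t \<in> E2n n" using i by (simp add: t_def E2n_def)
  obtain Y where Y: "Y \<in> C" "Y t = Pos" "supp Y \<subseteq> insert t Bw" using fc_ex[OF om basw tE tBw] by blast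
  define Y' where "Y' = neg_signed Y"
  have Y'C: "Y' \<in> C" using om_neg[OF om Y(1)] by (simp add: Y'_def)
  have LC: "lift Y' Zero \<in> Ch" using lex_liftC[OF lex Y'C] .
  have Z0C: "Z0 i \<in> Ch" using Z0_in[OF P i lex] .
  have Z0t: "Z0 i (Some t) = Pos" by (simp add: Z0_def t_def)
  have Z0N: "Z0 i None = Pos" by (simp add: Z0_def)
  have Z0o: "\<And>c. c \<noteq> t \<Longrightarrow> Z0 i (Some c) = Zero" by (simp add: Z0_def t_def)
  have ne1: "Z0 i \<noteq> neg_signed (lift Y' Zero)"
  proof
    assume "Z0 i = neg_signed (lift Y' Zero)"
    then have "Z0 i None = sneg (lift Y' Zero None)" by simp
    then show False using Z0N by simp
  qed
  obtain W where W: "W \<in> Ch" "W (Some t) = Zero" "conf W (Z0 i) (lift Y' Zero)"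
    using elim[OF omCh Z0C LC ne1, of "Some t"] Z0t Y(2) by (auto simp: Y'_def)
  have cW: "\<And>k. W k = Zero \<or> W k = Z0 i k \<or> W k = lift Y' Zero k" using W(3) by (simp add: conf_def)
  have sW: "supp W \<subseteq> insert None (Some ` Bw)"
  proof
    fix k assume k: "k \<in> supp W"
    show "k \<in> insert None (Some ` Bw)"
    proof (cases k)
      case (Some c)
      have Wc: "W (Some c) \<noteq> Zero" using k Some by (simp add: supp_def)
      then have ct: "c \<noteq> t" using W(2) by auto
      then have "W (Some c) = Y' c" using cW[of "Some c"] Wc Z0o[OF ct] by auto
      then have "c \<in> supp Y" using Wc by (simp add: Y'_def supp_def)
      then have "c \<in> Bw" using Y(3) ct by blast
      then show ?thesis using Some by blast
    qed simp
  qed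
  have WN: "W None = Pos"
  proof -
    have "W None \<noteq> Zero"
    proof
      assume "W None = Zero"
      then obtain Yz where Yz: "Yz \<in> C" "W = lift Yz Zero" using lex_Ch0[OF lex W(1)] by blast
      have "supp Yz \<subseteq> Bw" using sW Yz(2) supp_lift_Zero[of Yz] by auto
      then show False using indep_noc[OF indw Yz(1)] by blast
    qed
    then show ?thesis using cW[of None] Z0N by auto
  qed
  have nZ0C: "neg_signed (Z0 i) \<in> Ch" using om_neg[OF omCh Z0C] .
  have ne2: "W \<noteq> neg_signed (neg_signed (Z0 i))"
  proof
    assume "W = neg_signed (neg_signed (Z0 i))"
    then show False using W(2) Z0t by simp
  qed
  obtain U where U: "U \<in> Ch" "U None = Zero" "conf U W (neg_signed (Z0 i))"
    using elim[OF omCh W(1) nZ0C ne2, of None] WN Z0N by auto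
  obtain Y2 where Y2: "Y2 \<in> C" "U = lift Y2 Zero" using lex_Ch0[OF lex U(1) U(2)] by blast
  have cU: "\<And>k. Y2 k = Zero \<or> Y2 k = W (Some k) \<or> Y2 k = sneg (Z0 i (Some k))"
    using U(3) Y2(2) unfolding conf_def by (metis lift_Some neg_app)
  have Y2o: "\<forall>k. k \<noteq> Inr i \<longrightarrow> Y2 k = Zero \<or> Y2 k = W (Some k)"
  proof (intro allI impI)
    fix k :: "nat + nat" assume "k \<noteq> Inr i"
    then have "Z0 i (Some k) = Zero" using Z0o by (simp add: t_def)
    then show "Y2 k = Zero \<or> Y2 k = W (Some k)" using cU[of k] by auto
  qed
  have sY2: "supp Y2 \<subseteq> insert t Bw"
  proof
    fix k assume k: "k \<in> supp Y2"
    show "k \<in> insert t Bw"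
    proof (cases "k = t")
      case False
      then have "W (Some k) \<noteq> Zero" using Y2o k by (auto simp: supp_def t_def)
      then have "Some k \<in> insert None (Some ` Bw)" using sW by (auto simp: supp_def)
      then show ?thesis by auto
    qed simp
  qed
  have "Y2 t \<noteq> Zero"
  proof
    assume "Y2 t = Zero"
    then have "supp Y2 \<subseteq> Bw" using sY2 by (auto simp: supp_def)
    then show False using indep_noc[OF indw Y2(1)] by blast
  qed
  then have Y2t: "Y2 t = Neg" using cU[of t] W(2) Z0t by auto
  show ?thesis
    using W(1) WN sW Y2(1) sY2 Y2t Y2o by (auto simp: Bw_def t_def)
qed

theorem mainTheorem7:
  fixes n i :: nat
    and C :: "(nat + nat) signed set"
    and Ch :: "(nat + nat) option signed set"
  assumes "P_matroid n C"
    and "i < n"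
    and "lex_extension (E2n n) C Ch Neg (Inr i)"
  shows "(\<forall>v. v i \<longrightarrow> puso n Ch v i = Neg \<and> (\<forall>j<n. j \<noteq> i \<longrightarrow> puso n Ch v j = Zero))
       \<and> (\<forall>w. \<not> w i \<longrightarrow> puso n Ch w i = Pos)
       \<and> (uniform (E2n n) C \<longrightarrow> (\<forall>w. \<not> w i \<longrightarrow> (\<forall>j<n. puso n Ch w j \<noteq> Zero)))"
proof (intro conjI allI impI)
  note P = assms(1) and i = assms(2) and lex = assms(3)
  fix v assume v: "v i"
  have sZ: "supp (Z0 i) \<subseteq> insert None (Some ` Bv n v)"
  proof
    fix k assume "k \<in> supp (Z0 i)"
    then have "k = None \<or> k = Some (Inr i)" by (auto simp: supp_def Z0_def split: if_splits)
    then show "k \<in> insert None (Some ` Bv n v)" using v i by auto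
  qed
  have fc: "fund_circuit Ch (Some ` Bv n v) None = Z0 i"
    by (rule fcCh[OF P lex Z0_in[OF P i lex] _ sZ]) (simp add: Z0_def)
  show "puso n Ch v i = Neg" using v by (simp add: puso_def fc Z0_def)
  fix j assume "j < n" "j \<noteq> i"
  then show "puso n Ch v j = Zero" by (simp add: puso_def fc Z0_def)
next
  note P = assms(1) and i = assms(2) and lex = assms(3)
  fix w assume w: "\<not> w i"
  obtain W Y2 where WY: "W \<in> Ch" "W None = Pos" "supp W \<subseteq> insert None (Some ` Bv n w)" "Y2 \<in> C"
    "supp Y2 \<subseteq> insert (Inr i) (Bv n w)" "Y2 (Inr i) = Neg"
    "\<forall>k. k \<noteq> Inr i \<longrightarrow> Y2 k = Zero \<or> Y2 k = W (Some k)"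
    using partbc[OF P i lex, of w] w by blast
  have fc: "fund_circuit Ch (Some ` Bv n w) None = W" by (rule fcCh[OF P lex WY(1,2,3)])
  obtain j where j: "j < n" "Inl j \<in> supp Y2" "Inr j \<in> supp Y2" "Y2 (Inl j) \<noteq> sneg (Y2 (Inr j))"
    using P_cond[OF P WY(4)] by blast
  have "j = i"
  proof (rule ccontr)
    assume ji: "j \<noteq> i"
    have "Inl j \<in> Bv n w" "Inr j \<in> Bv n w" using j(2,3) WY(5) ji by auto
    then show False by simp
  qed
  then have "Y2 (Inl i) = Neg" using j WY(6) by (cases "Y2 (Inl i)") (auto simp: supp_def)
  moreover have "Y2 (Inl i) = Zero \<or> Y2 (Inl i) = W (Some (Inl i))" using WY(7) by blast
  ultimately have "W (Some (Inl i)) = Neg" by auto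
  then show "puso n Ch w i = Pos" using w by (simp add: puso_def fc)
next
  note P = assms(1) and i = assms(2) and lex = assms(3)
  assume unif: "uniform (E2n n) C"
  fix w j assume w: "\<not> w i" and j: "j < n"
  obtain W Y2 where WY: "W \<in> Ch" "W None = Pos" "supp W \<subseteq> insert None (Some ` Bv n w)" "Y2 \<in> C"
    "supp Y2 \<subseteq> insert (Inr i) (Bv n w)" "Y2 (Inr i) = Neg"
    "\<forall>k. k \<noteq> Inr i \<longrightarrow> Y2 k = Zero \<or> Y2 k = W (Some k)"
    using partbc[OF P i lex, of w] w by blast
  have fc: "fund_circuit Ch (Some ` Bv n w) None = W" by (rule fcCh[OF P lex WY(1,2,3)])
  define ej where "ej = (if w j then Inr j else Inl j :: nat + nat)"
  have ejB: "ej \<in> Bv n w" using j by (simp add: ej_def)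
  have tB: "Inr i \<notin> Bv n w" using w by simp
  have ejt: "ej \<noteq> Inr i" using ejB tB by auto
  define A where "A = insert (Inr i) (Bv n w) - {ej}"
  have AE: "A \<subseteq> E2n n" using Bv_sub[of n w] i by (auto simp: A_def E2n_def)
  have finB: "finite (Bv n w)" using finite_subset[OF Bv_sub E2n_fin] .
  have "card A = n"
    using finB tB ejB Bv_card[of n w] by (simp add: A_def card_insert_if)
  then have "card A = card (Sset n)" by (simp add: Sset_card)
  then have "basis (E2n n) C A" using unif P_S[OF P] AE unfolding uniform_def by blast
  then have "\<not> supp Y2 \<subseteq> A" using indep_noc[OF basis_indep WY(4)] by blast
  then have "ej \<in> supp Y2" using WY(5) by (auto simp: A_def)
  then have "W (Some ej) \<noteq> Zero" using WY(7) ejt by (auto simp: supp_def)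
  then show "puso n Ch w j \<noteq> Zero"
    by (cases "w j"; cases "W (Some ej)") (auto simp: puso_def fc ej_def)
qed


end
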